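(* Let $(\Gamma,\gamma)$ be a spin network and let $(\Gamma',\gamma)$ be obtained by reversing the cyclic ordering at one vertex whose incident edges have colors $a,b,c$ (the underlying graph and coloring unchanged). Then $$\langle\Gamma',\gamma\rangle^P=(-1)^{(a(a-1)+b(b-1)+c(c-1))/2}\,\langle\Gamma,\gamma\rangle^P,$$ and the same relation holds for the standard evaluation $\langle\cdot\rangle$.
   Context: A cubic ribbon graph $\Gamma$ is a finite graph all of whose vertices are trivalent (multiple edges and loops are allowed, as are components that are circles without vertices), together with a cyclic ordering of the three edge-ends at each vertex. A coloring $\gamma$ assigns to each edge $e\in E(\Gamma)$ a natural number $\gamma_e$; the pair $(\Gamma,\gamma)$ is a spin network. It is admissible if at every vertex with incident colors $a,b,c$ the sum $a+b+c$ is even and $|a-b|\le c\le a+b$. The Penrose evaluation $\langle\Gamma,\gamma\rangle^P$ is $0$ if $(\Gamma,\gamma)$ is not admissible; otherwise thicken $\Gamma$ into a surface using the cyclic orderings (vertices become disks, edges become untwisted bands), replace each edge colored $a$ by $a$ parallel strands in its band with the antisymmetrizer $\sum_{\sigma\in S_a}\mathrm{sgn}(\sigma)\sigma$ inserted, and in the disk of each vertex with incident colors $a,b,c$ join $(a+b-c)/2$ strands of the $a$-edge to the $b$-edge, $(a-b+c)/2$ strands of the $a$-edge to the $c$-edge and $(-a+b+c)/2$ strands of the $b$-edge to the $c$-edge by pairwise non-crossing arcs; expanding gives a signed sum of collections of closed loops, and a collection of $n$ loops is assigned the value $(-2)^n$. The (standard) evaluation is $\langle\Gamma,\gamma\rangle=\langle\Gamma,\gamma\rangle^P/\mathcal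 I!$, where $\mathcal I!=\prod_{v\in V(\Gamma)}\big(\tfrac{-a_v+b_v+c_v}{2}\big)!\big(\tfrac{a_v-b_v+c_v}{2}\big)!\big(\tfrac{a_v+b_v-c_v}{2}\big)!$ and $a_v,b_v,c_v$ are the colors of the edges at $v$ (and $\langle\Gamma,\gamma\rangle=0$ if not admissible). *)

theory Defs
  imports Complex_Main "HOL-Combinatorics.Permutations"
begin

text \<open>
  Each edge e has two ends (half-edges, darts) (e,True) and (e,False); loops and
  multiple edges are thereby allowed.  The cyclic orderings at the vertices are
  given by a permutation sigma of the darts all of whose orbits have length 3:
  each orbit is a vertex, and sigma sends each edge-end at a vertex to the next
  one in the cyclic order.  Circle components without vertices are recorded
  separately, as a list of their colors.
\<close>

definition darts :: "'e set \<Rightarrow> ('e \<times> bool) set" where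
  "darts E = E \<times> UNIV"

definition cubic_ribbon_graph :: "'e set \<Rightarrow> ('e \<times> bool \<Rightarrow> 'e \<times> bool) \<Rightarrow> bool" where
  "cubic_ribbon_graph E \<sigma> \<longleftrightarrow>
     finite E \<and> \<sigma> permutes darts E \<and>
     (\<forall>x\<in>darts E. \<sigma> x \<noteq> x \<and> \<sigma> (\<sigma> (\<sigma> x)) = x)"

definition vertices :: "'e set \<Rightarrow> ('e \<times> bool \<Rightarrow> 'e \<times> bool) \<Rightarrow> ('e \<times> bool) set set" where
  "vertices E \<sigma> = (\<lambda>x. {x, \<sigma> x, \<sigma> (\<sigma> x)}) ` darts E"

definition reverse_at :: "('e \<times> bool \<Rightarrow> 'e \<times> bool) \<Rightarrow> 'e \<times> bool \<Rightarrow> ('e \<times> bool \<Rightarrow> 'e \<times> bool)" where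
  "reverse_at \<sigma> x0 = (\<lambda>x. if x \<in> {x0, \<sigma> x0, \<sigma> (\<sigma> x0)} then \<sigma> (\<sigma> x) else \<sigma> x)"

definition admissible :: "'e set \<Rightarrow> ('e \<times> bool \<Rightarrow> 'e \<times> bool) \<Rightarrow> ('e \<Rightarrow> nat) \<Rightarrow> bool" where
  "admissible E \<sigma> col \<longleftrightarrow>
     (\<forall>x\<in>darts E.
        let a = col (fst x); b = col (fst (\<sigma> x)); c = col (fst (\<sigma> (\<sigma> x)))
        in even (a + b + c) \<and> \<bar>int a - int b\<bar> \<le> int c \<and> c \<le> a + b)"

text \<open>Number of arcs in the disk of the vertex of x joining the strands of the
  dart x to those of the next dart sigma x: (a+b-c)/2.\<close>
definition arcs :: "('e \<times> bool \<Rightarrow> 'e \<times> bool) \<Rightarrow> ('e \<Rightarrow> nat) \<Rightarrow> 'e \<times> bool \<Rightarrow> nat" where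
  "arcs \<sigma> col x = (col (fst x) + col (fst (\<sigma> x)) - col (fst (\<sigma> (\<sigma> x)))) div 2"

text \<open>Strand endpoints: the edge-end x of an edge colored a carries the points
  (x,0),...,(x,a-1), numbered in the counterclockwise order of the boundary of
  the vertex disk.\<close>
definition strand_points :: "'e set \<Rightarrow> ('e \<Rightarrow> nat) \<Rightarrow> (('e \<times> bool) \<times> nat) set" where
  "strand_points E col = {(x, i). x \<in> darts E \<and> i < col (fst x)}"

definition rflip :: "nat \<Rightarrow> nat \<Rightarrow> nat" where
  "rflip a i = (if i < a then a - 1 - i else i)"

text \<open>Strands inside the (untwisted) band of each edge e, with the permutation
  pi e inserted: point i at the end (e,True) is joined to point
  rflip (col e) (pi e i) at the end (e,False); pi e = id gives parallel strands
  (the numbering is reversed between the two ends of an untwisted band).\<close>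
definition edge_strands :: "'e set \<Rightarrow> ('e \<Rightarrow> nat) \<Rightarrow> ('e \<Rightarrow> nat \<Rightarrow> nat)
    \<Rightarrow> ((('e \<times> bool) \<times> nat) \<times> (('e \<times> bool) \<times> nat)) set" where
  "edge_strands E col \<pi> =
     {(((e, True), i), ((e, False), rflip (col e) (\<pi> e i))) | e i. e \<in> E \<and> i < col e}"

text \<open>Non-crossing arcs in the vertex disks: the last arcs sigma col x strands of
  the dart x are joined to the first ones of the dart sigma x.\<close>
definition vertex_arcs :: "'e set \<Rightarrow> ('e \<times> bool \<Rightarrow> 'e \<times> bool) \<Rightarrow> ('e \<Rightarrow> nat)
    \<Rightarrow> ((('e \<times> bool) \<times> nat) \<times> (('e \<times> bool) \<times> nat)) set" where
  "vertex_arcs E \<sigma> col =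
     {((x, col (fst x) - 1 - k), (\<sigma> x, k)) | x k. x \<in> darts E \<and> k < arcs \<sigma> col x}"

definition num_loops :: "'e set \<Rightarrow> ('e \<times> bool \<Rightarrow> 'e \<times> bool) \<Rightarrow> ('e \<Rightarrow> nat)
    \<Rightarrow> ('e \<Rightarrow> nat \<Rightarrow> nat) \<Rightarrow> nat" where
  "num_loops E \<sigma> col \<pi> =
     (let R = edge_strands E col \<pi> \<union> vertex_arcs E \<sigma> col
      in card (strand_points E col // ((R \<union> R\<inverse>)\<^sup>*)))"

definition edge_perms :: "'e set \<Rightarrow> ('e \<Rightarrow> nat) \<Rightarrow> ('e \<Rightarrow> nat \<Rightarrow> nat) set" where
  "edge_perms E col =
     {\<pi>. (\<forall>e\<in>E. \<pi> e permutes {..<col e}) \<and> (\<forall>e. e \<notin> E \<longrightarrow> \<pi> e = id)}"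

text \<open>A circle component colored a: its antisymmetrizer closed up; the loops
  are the cycles of the permutation.\<close>
definition circle_value :: "nat \<Rightarrow> int" where
  "circle_value a =
     (\<Sum>p | p permutes {..<a}.
        sign p * (-2) ^ (let R = {(i, p i) | i. i < a} in card ({..<a} // ((R \<union> R\<inverse>)\<^sup>*))))"

definition penrose_eval :: "'e set \<Rightarrow> ('e \<times> bool \<Rightarrow> 'e \<times> bool) \<Rightarrow> ('e \<Rightarrow> nat) \<Rightarrow> nat list \<Rightarrow> int" where
  "penrose_eval E \<sigma> col circ =
     (if admissible E \<sigma> col then
        (\<Sum>\<pi>\<in>edge_perms E col. (\<Prod>e\<in>E. sign (\<pi> e)) * (-2) ^ num_loops E \<sigma> col \<pi>)
          * (\<Prod>a\<leftarrow>circ. circle_value a)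
      else 0)"

definition I_fact :: "'e set \<Rightarrow> ('e \<times> bool \<Rightarrow> 'e \<times> bool) \<Rightarrow> ('e \<Rightarrow> nat) \<Rightarrow> nat" where
  "I_fact E \<sigma> col = (\<Prod>v\<in>vertices E \<sigma>. \<Prod>x\<in>v. fact (arcs \<sigma> col x))"

definition std_eval :: "'e set \<Rightarrow> ('e \<times> bool \<Rightarrow> 'e \<times> bool) \<Rightarrow> ('e \<Rightarrow> nat) \<Rightarrow> nat list \<Rightarrow> rat" where
  "std_eval E \<sigma> col circ =
     (if admissible E \<sigma> col then of_int (penrose_eval E \<sigma> col circ) / of_nat (I_fact E \<sigma> col)
      else 0)"

end

theory Submission
  imports Defs
begin

lemma rtrancl_map_bij:
  assumes "bij f"
  shows "(map_prod f f ` r)\<^sup>* = map_prod f f ` (r\<^sup>*)"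
proof
  show "map_prod f f ` (r\<^sup>*) \<subseteq> (map_prod f f ` r)\<^sup>*"
  proof
    fix p assume "p \<in> map_prod f f ` (r\<^sup>*)"
    then obtain x y where p: "p = (f x, f y)" and xy: "(x, y) \<in> r\<^sup>*" by auto
    from xy have "(f x, f y) \<in> (map_prod f f ` r)\<^sup>*"
    proof induction
      case base then show ?case by simp
    next
      case (step y z)
      then have "(f y, f z) \<in> map_prod f f ` r" by force
      with step show ?case by (simp add: rtrancl_into_rtrancl)
    qed
    then show "p \<in> (map_prod f f ` r)\<^sup>*" using p by simp
  qed
next
  have inj: "inj f" using assms bij_is_inj by blast
  have sur: "surj f" using assms bij_is_surj by blast
  have *: "(inv f u, inv f v) \<in> r\<^sup>*" if "(u, v) \<in> (map_prod f f ` r)\<^sup>*" for u v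
    using that
  proof induction
    case base then show ?case by simp
  next
    case (step y z)
    then obtain p q where pq: "(p, q) \<in> r" "y = f p" "z = f q" by auto
    then show ?case using step inj by (simp add: rtrancl_into_rtrancl)
  qed
  show "(map_prod f f ` r)\<^sup>* \<subseteq> map_prod f f ` (r\<^sup>*)"
  proof clarify
    fix u v assume "(u, v) \<in> (map_prod f f ` r)\<^sup>*"
    from *[OF this] have "(inv f u, inv f v) \<in> r\<^sup>*" .
    moreover have "(u, v) = map_prod f f (inv f u, inv f v)"
      using sur by (simp add: surj_f_inv_f)
    ultimately show "(u, v) \<in> map_prod f f ` r\<^sup>*" by blast
  qed
qed

lemma card_quotient_bij:
  assumes "bij f"
  shows "card ((f ` A) // (map_prod f f ` r)) = card (A // r)"
proof -
  have inj: "inj f" using assms bij_is_inj by blast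
  have img: "(map_prod f f ` r) `` {f x} = f ` (r `` {x})" for x
    using inj by (auto simp: inj_eq image_iff) 
  have "(f ` A) // (map_prod f f ` r) = (\<lambda>X. f ` X) ` (A // r)"
    unfolding quotient_def using img by auto
  moreover have "inj_on (\<lambda>X. f ` X) (A // r)"
    using inj by (simp add: inj_on_def inj_image_eq_iff)
  ultimately show ?thesis by (simp add: card_image)
qed

lemma rflip_rflip[simp]: "rflip n (rflip n i) = i"
  by (simp add: rflip_def)

lemma rflip_less_iff[simp]: "rflip n i < n \<longleftrightarrow> i < n"
  by (simp add: rflip_def)

lemma rflip_comp_rflip: "rflip n \<circ> rflip n = id"
  by (rule ext) simp

lemma rflip_permutes: "rflip n permutes {..<n}"
proof (rule bij_imp_permutes)
  show "bij_betw (rflip n) {..<n} {..<n}"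
    by (rule bij_betwI[where g="rflip n"]) auto
  show "\<And>x. x \<notin> {..<n} \<Longrightarrow> rflip n x = x" by (simp add: rflip_def)
qed

definition shiftc :: "nat \<Rightarrow> nat \<Rightarrow> nat" where
  "shiftc n i = (if i < n then i + 1 else if i = n then 0 else i)"

lemma shiftc_0: "shiftc 0 = id"
  by (rule ext) (simp add: shiftc_def)

lemma shiftc_Suc: "shiftc (Suc m) = shiftc m \<circ> Transposition.transpose m (Suc m)"
  by (rule ext) (auto simp: shiftc_def Transposition.transpose_def)

lemma shiftc_perm_sign: "permutation (shiftc n) \<and> sign (shiftc n) = (-1) ^ n"
proof (induction n)
  case 0 then show ?case by (simp add: shiftc_0)
next
  case (Suc m)
  have p: "permutation (Transposition.transpose m (Suc m))" by (rule permutation_swap_id)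
  have "sign (shiftc m \<circ> Transposition.transpose m (Suc m)) = sign (shiftc m) * sign (Transposition.transpose m (Suc m))"
    using Suc p by (intro sign_compose) auto
  moreover have "permutation (shiftc m \<circ> Transposition.transpose m (Suc m))"
    using Suc p by (intro permutation_compose) auto
  ultimately show ?case using Suc by (simp only: shiftc_Suc) (simp add: sign_swap_id)
qed

lemma rflip_Suc: "rflip (Suc n) = shiftc n \<circ> rflip n"
  by (rule ext) (auto simp: shiftc_def rflip_def)

lemma sign_rflip_aux: "permutation (rflip n) \<and> sign (rflip n) = (-1) ^ (\<Sum>k<n. k)"
proof (induction n)
  case 0
  have "rflip 0 = id" by (rule ext) (simp add: rflip_def)
  then show ?case by simp
next
  case (Suc m)
  have "sign (shiftc m \<circ> rflip m) = sign (shiftc m) * sign (rflip m)"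
    using Suc shiftc_perm_sign[of m] by (intro sign_compose) auto
  moreover have "permutation (shiftc m \<circ> rflip m)"
    using Suc shiftc_perm_sign[of m] by (intro permutation_compose) auto
  ultimately show ?case using Suc shiftc_perm_sign[of m] by (simp only: rflip_Suc) (simp add: power_add)
qed

lemma sign_rflip: "sign (rflip n) = (-1) ^ (n * (n - 1) div 2)"
proof -
  have "(\<Sum>k<n. k) = n * (n - 1) div 2"
  proof (induction n)
    case (Suc n)
    have "even (n * (n - 1))" by auto
    then have "n * (n - 1) div 2 + n = (n * (n - 1) + 2 * n) div 2" by auto
    also have "n * (n - 1) + 2 * n = Suc n * n" by (cases n) (auto simp: algebra_simps)
    finally show ?case using Suc by simp
  qed simp
  then show ?thesis using sign_rflip_aux by simp
qed

definition V0 :: "('e \<times> bool \<Rightarrow> 'e \<times> bool) \<Rightarrow> 'e \<times> bool \<Rightarrow> ('e \<times> bool) set" where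
  "V0 \<sigma> x0 = {x0, \<sigma> x0, \<sigma> (\<sigma> x0)}"

lemma cubic_perm: "cubic_ribbon_graph E \<sigma> \<Longrightarrow> \<sigma> permutes darts E"
  by (simp add: cubic_ribbon_graph_def)

lemma cubic_out: "cubic_ribbon_graph E \<sigma> \<Longrightarrow> x \<notin> darts E \<Longrightarrow> \<sigma> x = x"
  by (rule permutes_not_in[OF cubic_perm])

lemma cubic_in: "cubic_ribbon_graph E \<sigma> \<Longrightarrow> x \<in> darts E \<Longrightarrow> \<sigma> x \<in> darts E"
  by (simp add: permutes_in_image[OF cubic_perm])

lemma cubic_3: "cubic_ribbon_graph E \<sigma> \<Longrightarrow> \<sigma> (\<sigma> (\<sigma> x)) = x"
proof (cases "x \<in> darts E")
  case True
  assume "cubic_ribbon_graph E \<sigma>"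
  then show ?thesis using True unfolding cubic_ribbon_graph_def by blast
next
  case False
  assume C: "cubic_ribbon_graph E \<sigma>"
  then show ?thesis using False by (simp add: cubic_out[OF C False])
qed

lemma cubic_ne1: "cubic_ribbon_graph E \<sigma> \<Longrightarrow> x \<in> darts E \<Longrightarrow> \<sigma> x \<noteq> x"
  by (simp add: cubic_ribbon_graph_def)

lemma cubic_ne2: "cubic_ribbon_graph E \<sigma> \<Longrightarrow> x \<in> darts E \<Longrightarrow> \<sigma> (\<sigma> x) \<noteq> x"
proof
  assume C: "cubic_ribbon_graph E \<sigma>" and x: "x \<in> darts E" and h: "\<sigma> (\<sigma> x) = x"
  have "\<sigma> (\<sigma> (\<sigma> x)) = x" using C by (rule cubic_3)
  then have "\<sigma> x = x" by (simp only: h)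
  with cubic_ne1[OF C x] show False by simp
qed

lemma V0_closed:
  assumes C: "cubic_ribbon_graph E \<sigma>"
  shows "\<sigma> x \<in> V0 \<sigma> x0 \<longleftrightarrow> x \<in> V0 \<sigma> x0"
proof
  have x: "x = \<sigma> (\<sigma> (\<sigma> x))" using cubic_3[OF C] by simp
  assume "\<sigma> x \<in> V0 \<sigma> x0"
  then have "\<sigma> x = x0 \<or> \<sigma> x = \<sigma> x0 \<or> \<sigma> x = \<sigma> (\<sigma> x0)" by (simp add: V0_def)
  then show "x \<in> V0 \<sigma> x0"
  proof (elim disjE)
    assume "\<sigma> x = x0" then show ?thesis using x by (simp add: V0_def)
  next
    assume "\<sigma> x = \<sigma> x0" then have "x = x0" using x C by (metis cubic_3)
    then show ?thesis by (simp add: V0_def)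
  next
    assume "\<sigma> x = \<sigma> (\<sigma> x0)" then have "x = \<sigma> x0" using x C by (metis cubic_3)
    then show ?thesis by (simp add: V0_def)
  qed
next
  assume "x \<in> V0 \<sigma> x0"
  then show "\<sigma> x \<in> V0 \<sigma> x0" by (auto simp: V0_def cubic_3[OF C])
qed

lemma V0_darts: "cubic_ribbon_graph E \<sigma> \<Longrightarrow> x0 \<in> darts E \<Longrightarrow> V0 \<sigma> x0 \<subseteq> darts E"
  unfolding V0_def using cubic_in[of E \<sigma> x0] cubic_in[of E \<sigma> "\<sigma> x0"] by simp

lemma rev_apply: "reverse_at \<sigma> x0 x = (if x \<in> V0 \<sigma> x0 then \<sigma> (\<sigma> x) else \<sigma> x)"
  by (simp add: reverse_at_def V0_def)

lemma V0_rev: assumes C: "cubic_ribbon_graph E \<sigma>" shows "V0 (reverse_at \<sigma> x0) x0 = V0 \<sigma> x0"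
  unfolding V0_def reverse_at_def by (auto simp: cubic_3[OF C])

lemma rev_rev: "cubic_ribbon_graph E \<sigma> \<Longrightarrow> reverse_at (reverse_at \<sigma> x0) x0 = \<sigma>"
proof (rule ext)
  fix x assume C: "cubic_ribbon_graph E \<sigma>"
  show "reverse_at (reverse_at \<sigma> x0) x0 x = \<sigma> x"
    using C by (simp add: rev_apply[of "reverse_at \<sigma> x0"] V0_rev) (auto simp: rev_apply V0_closed[OF C] cubic_3[OF C])
qed

lemma rev_3: assumes C: "cubic_ribbon_graph E \<sigma>" shows " reverse_at \<sigma> x0 (reverse_at \<sigma> x0 (reverse_at \<sigma> x0 x)) = x"
  by (auto simp: rev_apply V0_closed[OF C] cubic_3[OF C])

lemma cubic_rev:
  assumes C: "cubic_ribbon_graph E \<sigma>" and x0: "x0 \<in> darts E"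
  shows "cubic_ribbon_graph E (reverse_at \<sigma> x0)"
proof -
  let ?r = "reverse_at \<sigma> x0"
  have m: "?r x \<in> darts E" if "x \<in> darts E" for x
    using C that by (auto simp: rev_apply cubic_in)
  have "bij_betw ?r (darts E) (darts E)"
    by (rule bij_betwI[where g="\<lambda>x. ?r (?r x)"]) (auto simp: m rev_3[OF C])
  moreover have "\<And>x. x \<notin> darts E \<Longrightarrow> ?r x = x"
    using C x0 V0_darts[OF C x0] by (auto simp: rev_apply cubic_out)
  ultimately have "?r permutes darts E" by (rule bij_imp_permutes)
  moreover have "\<forall>x\<in>darts E. ?r x \<noteq> x \<and> ?r (?r (?r x)) = x"
    using C by (auto simp: rev_apply cubic_ne1 cubic_ne2 rev_3[OF C] V0_closed[OF C] cubic_3[OF C])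
  ultimately show ?thesis using C by (simp add: cubic_ribbon_graph_def)
qed

lemma adm_rev:
  assumes C: "cubic_ribbon_graph E \<sigma>" and A: "admissible E \<sigma> col"
  shows "admissible E (reverse_at \<sigma> x0) col"
  unfolding admissible_def Let_def
proof
  fix x assume x: "x \<in> darts E"
  let ?a = "col (fst x)" and ?b = "col (fst (\<sigma> x))" and ?c = "col (fst (\<sigma> (\<sigma> x)))"
  have H: "even (?a + ?b + ?c) \<and> \<bar>int ?a - int ?b\<bar> \<le> int ?c \<and> ?c \<le> ?a + ?b"
    using A x unfolding admissible_def Let_def by blast
  show "even (col (fst x) + col (fst (reverse_at \<sigma> x0 x)) + col (fst (reverse_at \<sigma> x0 (reverse_at \<sigma> x0 x)))) \<and>
         \<bar>int (col (fst x)) - int (col (fst (reverse_at \<sigma> x0 x)))\<bar> \<le> int (col (fst (reverse_at \<sigma> x0 (reverse_at \<sigma> x0 x)))) \<and>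
         col (fst (reverse_at \<sigma> x0 (reverse_at \<sigma> x0 x))) \<le> col (fst x) + col (fst (reverse_at \<sigma> x0 x))"
  proof (cases "x \<in> V0 \<sigma> x0")
    case True
    then have "reverse_at \<sigma> x0 x = \<sigma> (\<sigma> x)" "reverse_at \<sigma> x0 (reverse_at \<sigma> x0 x) = \<sigma> x"
      using C by (auto simp: rev_apply V0_closed[OF C] cubic_3[OF C])
    moreover have "even (?a + ?c + ?b) \<and> \<bar>int ?a - int ?c\<bar> \<le> int ?b \<and> ?b \<le> ?a + ?c"
    proof -
      have "even (?a + ?c + ?b)" using H by (simp add: add_ac)
      moreover have "\<bar>int ?a - int ?c\<bar> \<le> int ?b" using H by linarith
      moreover have "?b \<le> ?a + ?c" using H by linarith
      ultimately show ?thesis by blast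
    qed
    ultimately show ?thesis by simp
  next
    case False
    then have "reverse_at \<sigma> x0 x = \<sigma> x" "reverse_at \<sigma> x0 (reverse_at \<sigma> x0 x) = \<sigma> (\<sigma> x)"
      using C by (auto simp: rev_apply V0_closed[OF C])
    then show ?thesis using H by simp
  qed
qed

definition rho :: "('e \<times> bool) set \<Rightarrow> ('e \<Rightarrow> nat) \<Rightarrow> 'e \<Rightarrow> bool \<Rightarrow> nat \<Rightarrow> nat" where
  "rho V col e b = (if (e, b) \<in> V then rflip (col e) else id)"

definition phi :: "('e \<times> bool) set \<Rightarrow> ('e \<Rightarrow> nat) \<Rightarrow> ('e \<times> bool) \<times> nat \<Rightarrow> ('e \<times> bool) \<times> nat" where
  "phi V col p = (fst p, rho V col (fst (fst p)) (snd (fst p)) (snd p))"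

definition Tpi :: "('e \<times> bool) set \<Rightarrow> ('e \<Rightarrow> nat) \<Rightarrow> ('e \<Rightarrow> nat \<Rightarrow> nat) \<Rightarrow> ('e \<Rightarrow> nat \<Rightarrow> nat)" where
  "Tpi V col \<pi> = (\<lambda>e. rho V col e False \<circ> \<pi> e \<circ> rho V col e True)"

lemma rho_rho[simp]: "rho V col e b (rho V col e b i) = i"
  by (simp add: rho_def)

lemma rho_less[simp]: "rho V col e b i < col e \<longleftrightarrow> i < col e"
  by (simp add: rho_def)

lemma rho_rflip: "rho V col e b (rflip (col e) i) = rflip (col e) (rho V col e b i)"
  by (simp add: rho_def)

lemma phi_simp[simp]: "phi V col ((e, b), i) = ((e, b), rho V col e b i)"
  by (simp add: phi_def)

lemma phi_phi[simp]: "phi V col (phi V col p) = p"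
  by (cases p) (auto simp: phi_def)

lemma bij_phi: "bij (phi V col)"
  by (rule o_bij[where g="phi V col"]) auto

lemma phi_strand_points: "phi V col ` strand_points E col = strand_points E col"
proof -
  have *: "phi V col p \<in> strand_points E col" if "p \<in> strand_points E col" for p
    using that by (auto simp: strand_points_def darts_def)
  show ?thesis
  proof
    show "phi V col ` strand_points E col \<subseteq> strand_points E col" using * by blast
    show "strand_points E col \<subseteq> phi V col ` strand_points E col"
      using * by (metis image_eqI phi_phi subsetI)
  qed
qed

lemma edge_strands_Tpi:
  "edge_strands E col (Tpi V col \<pi>) = map_prod (phi V col) (phi V col) ` edge_strands E col \<pi>"
proof (rule set_eqI)
  fix p
  show "p \<in> edge_strands E col (Tpi V col \<pi>) \<longleftrightarrow> p \<in> map_prod (phi V col) (phi V col) ` edge_strands E col \<pi>"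
  proof
    assume "p \<in> edge_strands E col (Tpi V col \<pi>)"
    then obtain e i where p: "p = (((e, True), i), ((e, False), rflip (col e) (Tpi V col \<pi> e i)))"
      and ei: "e \<in> E" "i < col e" unfolding edge_strands_def by blast
    let ?q = "(((e, True), rho V col e True i), ((e, False), rflip (col e) (\<pi> e (rho V col e True i))))"
    have "?q \<in> edge_strands E col \<pi>" unfolding edge_strands_def mem_Collect_eq
      by (rule exI[of _ e], rule exI[of _ "rho V col e True i"]) (simp add: ei)
    moreover have "p = map_prod (phi V col) (phi V col) ?q"
      using p by (simp add: Tpi_def rho_rflip)
    ultimately show "p \<in> map_prod (phi V col) (phi V col) ` edge_strands E col \<pi>" by (rule rev_image_eqI)
  next
    assume "p \<in> map_prod (phi V col) (phi V col) ` edge_strands E col \<pi>"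
    then obtain q where pq: "p = map_prod (phi V col) (phi V col) q" and q: "q \<in> edge_strands E col \<pi>" by (rule imageE)
    from q obtain e i where qe: "q = (((e, True), i), ((e, False), rflip (col e) (\<pi> e i)))"
      and ei: "e \<in> E" "i < col e" unfolding edge_strands_def by blast
    have p: "p = map_prod (phi V col) (phi V col) (((e, True), i), ((e, False), rflip (col e) (\<pi> e i)))"
      using pq qe by (simp only:)
    have "p = (((e, True), rho V col e True i), ((e, False), rflip (col e) (Tpi V col \<pi> e (rho V col e True i))))"
      using p by (simp add: Tpi_def rho_rflip)
    then show "p \<in> edge_strands E col (Tpi V col \<pi>)" unfolding edge_strands_def mem_Collect_eq
      by (intro exI[of _ e] exI[of _ "rho V col e True i"]) (simp add: ei)
  qed
qed


lemma phi_pair: "phi V col (y, j) = (y, if y \<in> V then rflip (col (fst y)) j else j)"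
  by (cases y) (simp add: rho_def)

lemma arcs_bound:
  assumes A: "admissible E \<sigma> col" and x: "x \<in> darts E" and k: "k < arcs \<sigma> col x"
  shows "k < col (fst x)" "k < col (fst (\<sigma> x))"
proof -
  let ?a = "col (fst x)" and ?b = "col (fst (\<sigma> x))" and ?c = "col (fst (\<sigma> (\<sigma> x)))"
  have H: "\<bar>int ?a - int ?b\<bar> \<le> int ?c"
    using A x unfolding admissible_def Let_def by blast
  have "k < (?a + ?b - ?c) div 2" using k by (simp add: arcs_def)
  then show "k < ?a" "k < ?b" using H by linarith+
qed

lemma arcs_rev_out:
  assumes C: "cubic_ribbon_graph E \<sigma>" and "x \<notin> V0 \<sigma> x0"
  shows "arcs (reverse_at \<sigma> x0) col x = arcs \<sigma> col x"
  using assms by (simp add: arcs_def rev_apply V0_closed[OF C])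

lemma arcs_rev_in:
  assumes C: "cubic_ribbon_graph E \<sigma>" and "x \<in> V0 \<sigma> x0"
  shows "arcs (reverse_at \<sigma> x0) col (\<sigma> x) = arcs \<sigma> col x"
  using assms by (simp add: arcs_def rev_apply V0_closed[OF C] cubic_3[OF C] add.commute)

lemma vertex_arcs_phi:
  assumes C: "cubic_ribbon_graph E \<sigma>" and A: "admissible E \<sigma> col"
  shows "map_prod (phi (V0 \<sigma> x0) col) (phi (V0 \<sigma> x0) col) ` vertex_arcs E \<sigma> col
     \<subseteq> vertex_arcs E (reverse_at \<sigma> x0) col \<union> (vertex_arcs E (reverse_at \<sigma> x0) col)\<inverse>"
proof
  fix p assume "p \<in> map_prod (phi (V0 \<sigma> x0) col) (phi (V0 \<sigma> x0) col) ` vertex_arcs E \<sigma> col"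
  then obtain q where pq: "p = map_prod (phi (V0 \<sigma> x0) col) (phi (V0 \<sigma> x0) col) q"
    and q: "q \<in> vertex_arcs E \<sigma> col" by (rule imageE)
  from q obtain x k where qe: "q = ((x, col (fst x) - 1 - k), (\<sigma> x, k))" and x: "x \<in> darts E" and k: "k < arcs \<sigma> col x"
    unfolding vertex_arcs_def by blast
  have p: "p = map_prod (phi (V0 \<sigma> x0) col) (phi (V0 \<sigma> x0) col) ((x, col (fst x) - 1 - k), (\<sigma> x, k))"
    using pq qe by (simp only:)
  note kb = arcs_bound[OF A x k]
  show "p \<in> vertex_arcs E (reverse_at \<sigma> x0) col \<union> (vertex_arcs E (reverse_at \<sigma> x0) col)\<inverse>"
  proof (cases "x \<in> V0 \<sigma> x0")
    case True
    then have s: "\<sigma> x \<in> V0 \<sigma> x0" using V0_closed[OF C] by blast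
    have p2: "p = ((x, k), (\<sigma> x, col (fst (\<sigma> x)) - 1 - k))"
      using p True s kb by (simp add: phi_pair rflip_def)
    have r: "reverse_at \<sigma> x0 (\<sigma> x) = x" using s C by (simp add: rev_apply cubic_3[OF C])
    have "((\<sigma> x, col (fst (\<sigma> x)) - 1 - k), (reverse_at \<sigma> x0 (\<sigma> x), k)) \<in> vertex_arcs E (reverse_at \<sigma> x0) col"
      unfolding vertex_arcs_def mem_Collect_eq
      by (intro exI[of _ "\<sigma> x"] exI[of _ k]) (simp add: cubic_in[OF C x] k arcs_rev_in[OF C True])
    then show ?thesis using p2 r by auto
  next
    case False
    then have s: "\<sigma> x \<notin> V0 \<sigma> x0" using V0_closed[OF C] by blast
    have p2: "p = ((x, col (fst x) - 1 - k), (reverse_at \<sigma> x0 x, k))"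
      using p False s by (simp add: phi_pair rev_apply)
    have "((x, col (fst x) - 1 - k), (reverse_at \<sigma> x0 x, k)) \<in> vertex_arcs E (reverse_at \<sigma> x0) col"
      unfolding vertex_arcs_def mem_Collect_eq
      by (intro exI[of _ x] exI[of _ k]) (simp add: x k arcs_rev_out[OF C False])
    then show ?thesis using p2 by auto
  qed
qed



lemma map_prod_converse: "map_prod f f ` (S\<inverse>) = (map_prod f f ` S)\<inverse>"
  by (auto simp: image_iff)

lemma phi_image_image: "map_prod (phi V col) (phi V col) ` (map_prod (phi V col) (phi V col) ` S) = S"
proof -
  have "(\<lambda>x. map_prod (phi V col) (phi V col) (map_prod (phi V col) (phi V col) x)) = id"
    by (rule ext) (simp add: map_prod_def split_def)
  then show ?thesis by (simp only: image_image image_id id_apply)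
qed

lemma vertex_arcs_sym:
  assumes C: "cubic_ribbon_graph E \<sigma>" and x0: "x0 \<in> darts E" and A: "admissible E \<sigma> col"
  shows "vertex_arcs E (reverse_at \<sigma> x0) col \<union> (vertex_arcs E (reverse_at \<sigma> x0) col)\<inverse>
       = map_prod (phi (V0 \<sigma> x0) col) (phi (V0 \<sigma> x0) col) ` (vertex_arcs E \<sigma> col \<union> (vertex_arcs E \<sigma> col)\<inverse>)"
    (is "?SR = ?M ` ?S")
proof -
  let ?r = "reverse_at \<sigma> x0"
  have 1: "?M ` ?S \<subseteq> ?SR"
    using vertex_arcs_phi[OF C A, of x0] by (auto simp: image_Un map_prod_converse)
  have C': "cubic_ribbon_graph E ?r" by (rule cubic_rev[OF C x0])
  have A': "admissible E ?r col" by (rule adm_rev[OF C A])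
  have "?M ` (vertex_arcs E ?r col) \<subseteq> ?S"
    using vertex_arcs_phi[OF C' A', of x0] by (simp add: rev_rev[OF C] V0_rev[OF C])
  then have "?M ` ?SR \<subseteq> ?S" by (auto simp: image_Un map_prod_converse)
  then have "?M ` (?M ` ?SR) \<subseteq> ?M ` ?S" by (rule image_mono)
  then have 2: "?SR \<subseteq> ?M ` ?S" by (simp only: phi_image_image)
  from 1 2 show ?thesis by (rule subset_antisym[rotated])
qed

lemma num_loops_rev:
  assumes C: "cubic_ribbon_graph E \<sigma>" and x0: "x0 \<in> darts E" and A: "admissible E \<sigma> col"
  shows "num_loops E (reverse_at \<sigma> x0) col (Tpi (V0 \<sigma> x0) col \<pi>) = num_loops E \<sigma> col \<pi>"
proof -
  let ?V = "V0 \<sigma> x0"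
  let ?f = "phi ?V col"
  let ?M = "map_prod ?f ?f"
  let ?R = "edge_strands E col \<pi> \<union> vertex_arcs E \<sigma> col"
  let ?R' = "edge_strands E col (Tpi ?V col \<pi>) \<union> vertex_arcs E (reverse_at \<sigma> x0) col"
  have "?R' \<union> ?R'\<inverse> = (edge_strands E col (Tpi ?V col \<pi>) \<union> (edge_strands E col (Tpi ?V col \<pi>))\<inverse>)
      \<union> (vertex_arcs E (reverse_at \<sigma> x0) col \<union> (vertex_arcs E (reverse_at \<sigma> x0) col)\<inverse>)"
    by blast
  also have "\<dots> = ?M ` (edge_strands E col \<pi> \<union> (edge_strands E col \<pi>)\<inverse>)
      \<union> ?M ` (vertex_arcs E \<sigma> col \<union> (vertex_arcs E \<sigma> col)\<inverse>)"
    by (simp only: vertex_arcs_sym[OF C x0 A] edge_strands_Tpi image_Un map_prod_converse)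
  also have "\<dots> = ?M ` (?R \<union> ?R\<inverse>)" by (simp only: image_Un[symmetric]) (rule arg_cong[where f="image ?M"], blast)
  finally have eq: "?R' \<union> ?R'\<inverse> = ?M ` (?R \<union> ?R\<inverse>)" .
  have "num_loops E (reverse_at \<sigma> x0) col (Tpi ?V col \<pi>) = card (strand_points E col // ((?R' \<union> ?R'\<inverse>)\<^sup>*))"
    by (simp add: num_loops_def Let_def)
  also have "\<dots> = card ((?f ` strand_points E col) // (?M ` ((?R \<union> ?R\<inverse>)\<^sup>*)))"
    by (simp only: eq rtrancl_map_bij[OF bij_phi] phi_strand_points)
  also have "\<dots> = card (strand_points E col // ((?R \<union> ?R\<inverse>)\<^sup>*))"
    by (rule card_quotient_bij[OF bij_phi])
  also have "\<dots> = num_loops E \<sigma> col \<pi>"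
    by (simp add: num_loops_def Let_def)
  finally show ?thesis .
qed

lemma rho_permutes: "rho V col e b permutes {..<col e}"
  by (simp add: rho_def rflip_permutes permutes_id)

lemma sign_rho: "sign (rho V col e b) = (if (e, b) \<in> V then (-1) ^ (col e * (col e - 1) div 2) else 1)"
  by (simp add: rho_def sign_rflip)

lemma Tpi_Tpi: "Tpi V col (Tpi V col \<pi>) = \<pi>"
  by (rule ext, rule ext) (simp add: Tpi_def)

lemma Tpi_edge_perms:
  assumes V: "V \<subseteq> darts E" and p: "\<pi> \<in> edge_perms E col"
  shows "Tpi V col \<pi> \<in> edge_perms E col"
proof -
  have 1: "Tpi V col \<pi> e permutes {..<col e}" if "e \<in> E" for e
  proof -
    have "\<pi> e permutes {..<col e}" using p that by (simp add: edge_perms_def)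
    then show ?thesis unfolding Tpi_def
      by (intro permutes_compose rho_permutes)
  qed
  have 2: "Tpi V col \<pi> e = id" if "e \<notin> E" for e
  proof -
    have "(e, b) \<notin> V" for b using V that by (auto simp: darts_def)
    moreover have "\<pi> e = id" using p that by (simp add: edge_perms_def)
    ultimately show ?thesis by (simp add: Tpi_def rho_def)
  qed
  from 1 2 show ?thesis by (simp add: edge_perms_def)
qed

lemma bij_Tpi:
  assumes V: "V \<subseteq> darts E"
  shows "bij_betw (Tpi V col) (edge_perms E col) (edge_perms E col)"
  by (rule bij_betwI[where g="Tpi V col"]) (auto simp: Tpi_edge_perms[OF V] Tpi_Tpi)

lemma sign_Tpi:
  assumes "\<pi> e permutes {..<col e}"
  shows "sign (Tpi V col \<pi> e) = sign (rho V col e False) * sign (rho V col e True) * sign (\<pi> e)"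
proof -
  have pf: "permutation (rho V col e b)" for b
    by (rule permutes_imp_permutation[OF finite_lessThan rho_permutes])
  have pp: "permutation (\<pi> e)" by (rule permutes_imp_permutation[OF finite_lessThan assms])
  have "sign (Tpi V col \<pi> e) = sign (rho V col e False) * (sign (\<pi> e) * sign (rho V col e True))"
    unfolding Tpi_def using pf pp by (simp add: sign_compose permutation_compose)
  then show ?thesis by (simp add: mult_ac)
qed

lemma prod_sign_Tpi:
  assumes V: "V \<subseteq> darts E" and fin: "finite E" and p: "\<pi> \<in> edge_perms E col"
  shows "(\<Prod>e\<in>E. sign (Tpi V col \<pi> e)) =
     (\<Prod>d\<in>V. (-1) ^ (col (fst d) * (col (fst d) - 1) div 2)) * (\<Prod>e\<in>E. sign (\<pi> e))"
proof -
  let ?s = "\<lambda>n::nat. ((-1::int) ^ (n * (n - 1) div 2))"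
  let ?g = "\<lambda>d. if d \<in> V then ?s (col (fst d)) else 1"
  have "(\<Prod>e\<in>E. sign (Tpi V col \<pi> e)) = (\<Prod>e\<in>E. (?g (e, False) * ?g (e, True)) * sign (\<pi> e))"
    using p by (intro prod.cong refl) (simp add: edge_perms_def sign_Tpi sign_rho)
  also have "\<dots> = (\<Prod>e\<in>E. ?g (e, False) * ?g (e, True)) * (\<Prod>e\<in>E. sign (\<pi> e))"
    by (simp add: prod.distrib)
  also have "(\<Prod>e\<in>E. ?g (e, False) * ?g (e, True)) = (\<Prod>d\<in>darts E. ?g d)"
  proof -
    have "(\<Prod>d\<in>darts E. ?g d) = (\<Prod>e\<in>E. \<Prod>b\<in>UNIV. ?g (e, b))"
      unfolding darts_def by (rule prod.cartesian_product')
    also have "\<dots> = (\<Prod>e\<in>E. ?g (e, False) * ?g (e, True))"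
      by (simp add: UNIV_bool)
    finally show ?thesis by simp
  qed
  also have "(\<Prod>d\<in>darts E. ?g d) = (\<Prod>d\<in>V. ?s (col (fst d)))"
  proof -
    have fd: "finite (darts E)" using fin by (simp add: darts_def)
    have "(\<Prod>d\<in>darts E. ?g d) = (\<Prod>d\<in>V. ?g d)"
      using fd V by (intro prod.mono_neutral_right) auto
    also have "\<dots> = (\<Prod>d\<in>V. ?s (col (fst d)))" by (intro prod.cong) auto
    finally show ?thesis .
  qed
  finally show ?thesis .
qed

lemma sum_rev:
  assumes C: "cubic_ribbon_graph E \<sigma>" and x0: "x0 \<in> darts E" and A: "admissible E \<sigma> col"
  shows "(\<Sum>\<pi>\<in>edge_perms E col. (\<Prod>e\<in>E. sign (\<pi> e)) * (-2) ^ num_loops E (reverse_at \<sigma> x0) col \<pi>)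
    = (\<Prod>d\<in>V0 \<sigma> x0. (-1) ^ (col (fst d) * (col (fst d) - 1) div 2))
      * (\<Sum>\<pi>\<in>edge_perms E col. (\<Prod>e\<in>E. sign (\<pi> e)) * (-2) ^ num_loops E \<sigma> col \<pi>)"
proof -
  let ?V = "V0 \<sigma> x0"
  let ?h = "\<lambda>\<pi>. (\<Prod>e\<in>E. sign (\<pi> e)) * (-2::int) ^ num_loops E (reverse_at \<sigma> x0) col \<pi>"
  have V: "?V \<subseteq> darts E" by (rule V0_darts[OF C x0])
  have fin: "finite E" using C by (simp add: cubic_ribbon_graph_def)
  have "(\<Sum>\<pi>\<in>edge_perms E col. ?h \<pi>) = (\<Sum>\<pi>\<in>edge_perms E col. ?h (Tpi ?V col \<pi>))"
    by (rule sum.reindex_bij_betw[OF bij_Tpi[OF V], symmetric])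
  also have "\<dots> = (\<Sum>\<pi>\<in>edge_perms E col. (\<Prod>d\<in>?V. (-1) ^ (col (fst d) * (col (fst d) - 1) div 2))
      * ((\<Prod>e\<in>E. sign (\<pi> e)) * (-2) ^ num_loops E \<sigma> col \<pi>))"
    by (intro sum.cong refl) (simp add: prod_sign_Tpi[OF V fin] num_loops_rev[OF C x0 A] mult_ac)
  also have "\<dots> = (\<Prod>d\<in>?V. (-1) ^ (col (fst d) * (col (fst d) - 1) div 2))
      * (\<Sum>\<pi>\<in>edge_perms E col. (\<Prod>e\<in>E. sign (\<pi> e)) * (-2) ^ num_loops E \<sigma> col \<pi>)"
    by (simp add: sum_distrib_left)
  finally show ?thesis .
qed

lemma V0_prod:
  assumes C: "cubic_ribbon_graph E \<sigma>" and x0: "x0 \<in> darts E"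
  shows "(\<Prod>d\<in>V0 \<sigma> x0. ((-1::int) ^ (col (fst d) * (col (fst d) - 1) div 2)))
    = (-1) ^ ((col (fst x0) * (col (fst x0) - 1) + col (fst (\<sigma> x0)) * (col (fst (\<sigma> x0)) - 1)
         + col (fst (\<sigma> (\<sigma> x0))) * (col (fst (\<sigma> (\<sigma> x0))) - 1)) div 2)"
proof -
  have d1: "\<sigma> x0 \<noteq> x0" by (rule cubic_ne1[OF C x0])
  have d2: "\<sigma> (\<sigma> x0) \<noteq> x0" by (rule cubic_ne2[OF C x0])
  have d3: "\<sigma> (\<sigma> x0) \<noteq> \<sigma> x0" by (rule cubic_ne1[OF C cubic_in[OF C x0]])
  have ev: "even (n * (n - 1))" for n :: nat by auto
  have dv: "(p + q + r) div 2 = p div 2 + q div 2 + r div 2" if "even p" "even q" "even r" for p q r :: nat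
    using that by auto
  define a where "a = col (fst x0)"
  define b where "b = col (fst (\<sigma> x0))"
  define c where "c = col (fst (\<sigma> (\<sigma> x0)))"
  have "(\<Prod>d\<in>V0 \<sigma> x0. ((-1::int) ^ (col (fst d) * (col (fst d) - 1) div 2)))
      = (-1) ^ (a * (a - 1) div 2) * ((-1) ^ (b * (b - 1) div 2) * (-1) ^ (c * (c - 1) div 2))"
    unfolding V0_def a_def b_def c_def using d1 d2 d3 by simp
  also have "\<dots> = (-1) ^ (a * (a - 1) div 2 + b * (b - 1) div 2 + c * (c - 1) div 2)"
    by (simp add: power_add)
  also have "a * (a - 1) div 2 + b * (b - 1) div 2 + c * (c - 1) div 2 = (a * (a - 1) + b * (b - 1) + c * (c - 1)) div 2"
    by (rule dv[OF ev ev ev, symmetric])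
  finally show ?thesis unfolding a_def b_def c_def .
qed

lemma vertices_rev:
  assumes C: "cubic_ribbon_graph E \<sigma>"
  shows "vertices E (reverse_at \<sigma> x0) = vertices E \<sigma>"
  unfolding vertices_def
proof (rule image_cong[OF refl])
  fix x
  show "{x, reverse_at \<sigma> x0 x, reverse_at \<sigma> x0 (reverse_at \<sigma> x0 x)} = {x, \<sigma> x, \<sigma> (\<sigma> x)}"
  proof (cases "x \<in> V0 \<sigma> x0")
    case True
    then have "reverse_at \<sigma> x0 x = \<sigma> (\<sigma> x)" "reverse_at \<sigma> x0 (reverse_at \<sigma> x0 x) = \<sigma> x"
      by (auto simp: rev_apply V0_closed[OF C] cubic_3[OF C])
    then show ?thesis by auto
  next
    case False
    then have "reverse_at \<sigma> x0 x = \<sigma> x" "reverse_at \<sigma> x0 (reverse_at \<sigma> x0 x) = \<sigma> (\<sigma> x)"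
      by (auto simp: rev_apply V0_closed[OF C])
    then show ?thesis by simp
  qed
qed

lemma I_fact_rev:
  assumes C: "cubic_ribbon_graph E \<sigma>"
  shows "I_fact E (reverse_at \<sigma> x0) col = I_fact E \<sigma> col"
  unfolding I_fact_def vertices_rev[OF C]
proof (rule prod.cong[OF refl])
  fix v assume "v \<in> vertices E \<sigma>"
  then obtain y where v: "v = {y, \<sigma> y, \<sigma> (\<sigma> y)}" unfolding vertices_def by (rule imageE)
  show "(\<Prod>x\<in>v. fact (arcs (reverse_at \<sigma> x0) col x)) = (\<Prod>x\<in>v. fact (arcs \<sigma> col x))"
  proof (cases "y \<in> V0 \<sigma> x0")
    case True
    have sub: "x \<in> V0 \<sigma> x0" if "x \<in> v" for x
      using that True v by (auto simp: V0_closed[OF C])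
    have inj: "inj \<sigma>" using cubic_perm[OF C] permutes_inj by blast
    have img: "\<sigma> ` v = v" using v cubic_3[OF C] by auto
    have bij: "bij_betw \<sigma> v v" using inj img by (simp add: bij_betw_def inj_on_subset[OF inj subset_UNIV])
    have "(\<Prod>x\<in>v. fact (arcs (reverse_at \<sigma> x0) col x)) = (\<Prod>x\<in>v. fact (arcs (reverse_at \<sigma> x0) col (\<sigma> x)))"
      by (rule prod.reindex_bij_betw[OF bij, symmetric])
    also have "\<dots> = (\<Prod>x\<in>v. fact (arcs \<sigma> col x))"
      by (intro prod.cong refl) (simp add: arcs_rev_in[OF C sub])
    finally show ?thesis .
  next
    case False
    have sub: "x \<notin> V0 \<sigma> x0" if "x \<in> v" for x
      using that False v by (auto simp: V0_closed[OF C])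
    show ?thesis by (intro prod.cong refl) (simp add: arcs_rev_out[OF C sub])
  qed
qed

theorem lemma6p1:
  fixes E :: "'e set" and \<sigma> :: "'e \<times> bool \<Rightarrow> 'e \<times> bool" and col :: "'e \<Rightarrow> nat"
    and circ :: "nat list" and x0 :: "'e \<times> bool" and a b c :: nat
  assumes "cubic_ribbon_graph E \<sigma>"
    and "x0 \<in> darts E"
    and "a = col (fst x0)" and "b = col (fst (\<sigma> x0))" and "c = col (fst (\<sigma> (\<sigma> x0)))"
  shows "penrose_eval E (reverse_at \<sigma> x0) col circ
           = (-1) ^ ((a * (a - 1) + b * (b - 1) + c * (c - 1)) div 2) * penrose_eval E \<sigma> col circ
       \<and> std_eval E (reverse_at \<sigma> x0) col circ
           = (-1) ^ ((a * (a - 1) + b * (b - 1) + c * (c - 1)) div 2) * std_eval E \<sigma> col circ"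
proof -
  note C = assms(1) and x0 = assms(2)
  let ?r = "reverse_at \<sigma> x0"
  let ?n = "(a * (a - 1) + b * (b - 1) + c * (c - 1)) div 2"
  have adm: "admissible E ?r col \<longleftrightarrow> admissible E \<sigma> col"
  proof
    assume "admissible E ?r col"
    from adm_rev[OF cubic_rev[OF C x0] this, of x0] show "admissible E \<sigma> col"
      by (simp add: rev_rev[OF C])
  qed (rule adm_rev[OF C])
  have P: "penrose_eval E ?r col circ = (-1) ^ ?n * penrose_eval E \<sigma> col circ"
  proof (cases "admissible E \<sigma> col")
    case True
    let ?L = "\<lambda>s. (\<Sum>\<pi>\<in>edge_perms E col. (\<Prod>e\<in>E. sign (\<pi> e)) * (-2::int) ^ num_loops E s col \<pi>)"
    have K: "(\<Prod>d\<in>V0 \<sigma> x0. ((-1::int) ^ (col (fst d) * (col (fst d) - 1) div 2))) = (-1) ^ ?n"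
      unfolding assms(3-5) by (rule V0_prod[OF C x0])
    have "penrose_eval E ?r col circ = ?L ?r * (\<Prod>a\<leftarrow>circ. circle_value a)"
      using True adm by (simp add: penrose_eval_def)
    also have "?L ?r = (-1) ^ ?n * ?L \<sigma>"
      using sum_rev[OF C x0 True] K by simp
    also have "(-1) ^ ?n * ?L \<sigma> * (\<Prod>a\<leftarrow>circ. circle_value a) = (-1) ^ ?n * penrose_eval E \<sigma> col circ"
      using True by (simp add: penrose_eval_def)
    finally show ?thesis .
  next
    case False
    then show ?thesis using adm by (simp add: penrose_eval_def)
  qed
  have S: "std_eval E ?r col circ = (-1) ^ ?n * std_eval E \<sigma> col circ"
    using adm unfolding std_eval_def I_fact_rev[OF C] P by simp
  from P S show ?thesis by blast
qed

end
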